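(* Let $x,z\in X^\infty$. Then $(F_x,\phi_x)\cong(F_z,\phi_z)$ as extended representation graphs if and only if $x\sim_\infty z$.
   Context: $E=(E^0,E^1,s,r)$ is a row-finite directed graph; for each vertex $v$ emitting an edge a fixed edge $e^v\in s^{-1}(v)$ is called special, others nonspecial. The double graph $E_d$ has vertices $E^0$ and edges $e$ (real) and $e^*$ (ghost) for $e\in E^1$, with $s_d(e)=s(e),r_d(e)=r(e),s_d(e^* )=r(e),r_d(e^* )=s(e)$. For a path $p=e_1\dots e_n$ set $p^*=e_n^*\dots e_1^*$. The set $X$ of (finite) basis paths consists of the paths in $E_d$: vertices; $p,p^*$ for paths $p$ of length $\ge1$ in $E$; $pq^*$ with $p=e_1\dots e_k,q=f_1\dots f_n$ of length $\ge1$ in $E$, $r(p)=r(q)$, and $e_k\ne f_n$ or $e_k=f_n$ nonspecial. $X^\infty$ is the set of left-infinite words $x=\dots x_3x_2x_1$ of edges of $E_d$ such that each $x_n\dots x_1$ is a basis path; $x\sim_\infty z$ iff there are $m,n\ge0$ with $\dots x_{m+2}x_{m+1}=\dots z_{n+2}z_{n+1}$. An extended representation graph for $E$ is a pair $(F,\phi)$, $F$ a directed graph, $\phi:F\to E_d$ a graph homomorphism, such that for every $w\in F^0$: (i) $w$ is a source or receives exactly one edge $f_w$; (ii) if $w$ is a source or $\phi(f_w)$ is a nonspecial real edge, $\phi$ maps $s^{-1}(w)$ bijectively onto $s_d^{-1}(\phi(w))$; (iii) if $\phi(f_w)$ is a special real edge, onto $s_d^{-1}(\phi(w))\setminus\{\phi(f_w)^*\}$;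 (iv) if $\phi(f_w)$ is a ghost edge, onto the ghost edges in $s_d^{-1}(\phi(w))$. An isomorphism $(F,\phi)\to(G,\psi)$ is a graph isomorphism $\alpha$ with $\psi\circ\alpha=\phi$. $(F_x,\phi_x)$ for $x=\dots x_2x_1\in X^\infty$: for $i\in\mathbb N$, $X_i$ = basis paths $y=y_1\dots y_n$, $n\ge1$, with $x_iy_1$ a basis path and $y_1\ne x_{i-1}$ if $i\ge2$. Vertices $w_i$ ($i\in\mathbb N$), $w_{i,y}$ ($y\in X_i$), all distinct; edges $f_i$ from $w_{i+1}$ to $w_i$, and $f_{i,y}$ to $w_{i,y}$ from $w_i$ if $|y|=1$, from $w_{i,y_1\dots y_{n-1}}$ if $n\ge2$; $\phi_x(w_i)=r_d(x_i)$, $\phi_x(w_{i,y})=r_d(y)$, $\phi_x(f_i)=x_i$, $\phi_x(f_{i,y})=$ last edge of $y$. *)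

theory Defs
  imports Main
begin

text \<open>The choice of special edges is a function sp :: 'v => 'e; for a vertex v emitting
  an edge, sp v is the special edge e^v.  An edge e is nonspecial iff e ~= sp (s e).\<close>

definition graph_wf :: "'v set \<Rightarrow> 'e set \<Rightarrow> ('e \<Rightarrow> 'v) \<Rightarrow> ('e \<Rightarrow> 'v) \<Rightarrow> bool" where
  "graph_wf E0 E1 s r \<longleftrightarrow> (\<forall>e\<in>E1. s e \<in> E0 \<and> r e \<in> E0)"

definition row_finite :: "'v set \<Rightarrow> 'e set \<Rightarrow> ('e \<Rightarrow> 'v) \<Rightarrow> bool" where
  "row_finite E0 E1 s \<longleftrightarrow> (\<forall>v\<in>E0. finite {e\<in>E1. s e = v})"

definition special_choice :: "'v set \<Rightarrow> 'e set \<Rightarrow> ('e \<Rightarrow> 'v) \<Rightarrow> ('v \<Rightarrow> 'e) \<Rightarrow> bool" where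
  "special_choice E0 E1 s sp \<longleftrightarrow>
     (\<forall>v\<in>E0. (\<exists>e\<in>E1. s e = v) \<longrightarrow> sp v \<in> E1 \<and> s (sp v) = v)"

text \<open>Edges of the double graph E_d: real edges e and ghost edges e^*.\<close>
datatype 'e dedge = Re 'e | Gh 'e

fun und :: "'e dedge \<Rightarrow> 'e" where
  "und (Re e) = e" | "und (Gh e) = e"

fun is_real :: "'e dedge \<Rightarrow> bool" where
  "is_real (Re e) = True" | "is_real (Gh e) = False"

fun sd :: "('e \<Rightarrow> 'v) \<Rightarrow> ('e \<Rightarrow> 'v) \<Rightarrow> 'e dedge \<Rightarrow> 'v" where
  "sd s r (Re e) = s e" | "sd s r (Gh e) = r e"

fun rd :: "('e \<Rightarrow> 'v) \<Rightarrow> ('e \<Rightarrow> 'v) \<Rightarrow> 'e dedge \<Rightarrow> 'v" where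
  "rd s r (Re e) = r e" | "rd s r (Gh e) = s e"

text \<open>Nonempty paths in E_d, written left to right: ys!0 is traversed first.\<close>
definition dpath :: "'e set \<Rightarrow> ('e \<Rightarrow> 'v) \<Rightarrow> ('e \<Rightarrow> 'v) \<Rightarrow> 'e dedge list \<Rightarrow> bool" where
  "dpath E1 s r ys \<longleftrightarrow> ys \<noteq> [] \<and> (\<forall>y\<in>set ys. und y \<in> E1) \<and>
     (\<forall>i. Suc i < length ys \<longrightarrow> rd s r (ys ! i) = sd s r (ys ! Suc i))"

text \<open>Basis paths of length >= 1: p, p^*, or p q^* with the condition on the junction
  (last edge e_k of p, last edge f_n of q: e_k ~= f_n, or e_k = f_n nonspecial).\<close>
definition basis_path :: "'e set \<Rightarrow> ('e \<Rightarrow> 'v) \<Rightarrow> ('e \<Rightarrow> 'v) \<Rightarrow> ('v \<Rightarrow> 'e) \<Rightarrow> 'e dedge list \<Rightarrow> bool" where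
  "basis_path E1 s r sp ys \<longleftrightarrow> dpath E1 s r ys \<and>
     (\<exists>a b. ys = a @ b \<and> (\<forall>y\<in>set a. is_real y) \<and> (\<forall>y\<in>set b. \<not> is_real y) \<and>
        (a \<noteq> [] \<longrightarrow> b \<noteq> [] \<longrightarrow> und (last a) \<noteq> und (hd b) \<or> und (last a) \<noteq> sp (s (und (last a)))))"

text \<open>Left-infinite words x = ... x_3 x_2 x_1 are stored as x :: nat => 'e dedge with
  x_i = x (i - 1), i.e. x 0 = x_1.  The finite word x_n ... x_1 is rev (map x [0..<n]).\<close>
definition Xinf :: "'e set \<Rightarrow> ('e \<Rightarrow> 'v) \<Rightarrow> ('e \<Rightarrow> 'v) \<Rightarrow> ('v \<Rightarrow> 'e) \<Rightarrow> (nat \<Rightarrow> 'e dedge) set" where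
  "Xinf E1 s r sp = {x. \<forall>n\<ge>1. basis_path E1 s r sp (rev (map x [0..<n]))}"

definition tail_equiv :: "(nat \<Rightarrow> 'e dedge) \<Rightarrow> (nat \<Rightarrow> 'e dedge) \<Rightarrow> bool" where
  "tail_equiv x z \<longleftrightarrow> (\<exists>m n. \<forall>k. x (m + k) = z (n + k))"

record ('w, 'f, 'v, 'e) lgraph =
  LV :: "'w set"
  LE :: "'f set"
  Ls :: "'f \<Rightarrow> 'w"
  Lr :: "'f \<Rightarrow> 'w"
  phiV :: "'w \<Rightarrow> 'v"
  phiE :: "'f \<Rightarrow> 'e dedge"

definition lgraph_iso :: "('w, 'f, 'v, 'e) lgraph \<Rightarrow> ('w2, 'f2, 'v, 'e) lgraph \<Rightarrow> bool" where
  "lgraph_iso F G \<longleftrightarrow> (\<exists>a b. bij_betw a (LV F) (LV G) \<and> bij_betw b (LE F) (LE G) \<and>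
     (\<forall>f\<in>LE F. Ls G (b f) = a (Ls F f) \<and> Lr G (b f) = a (Lr F f) \<and> phiE G (b f) = phiE F f) \<and>
     (\<forall>w\<in>LV F. phiV G (a w) = phiV F w))"

text \<open>The graph (F_x, phi_x).  Indices i range over {1,2,...}; x_i = x (i - 1).
  W i = w_i, WY i y = w_{i,y}; FE i = f_i, FY i y = f_{i,y}.\<close>
datatype 'e fvert = W nat | WY nat "'e dedge list"
datatype 'e fedge = FE nat | FY nat "'e dedge list"

definition Xi :: "'e set \<Rightarrow> ('e \<Rightarrow> 'v) \<Rightarrow> ('e \<Rightarrow> 'v) \<Rightarrow> ('v \<Rightarrow> 'e) \<Rightarrow> (nat \<Rightarrow> 'e dedge) \<Rightarrow> nat \<Rightarrow> 'e dedge list set" where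
  "Xi E1 s r sp x i = {y. basis_path E1 s r sp y \<and> basis_path E1 s r sp [x (i - 1), hd y] \<and>
                          (i \<ge> 2 \<longrightarrow> hd y \<noteq> x (i - 2))}"

definition Fx :: "'e set \<Rightarrow> ('e \<Rightarrow> 'v) \<Rightarrow> ('e \<Rightarrow> 'v) \<Rightarrow> ('v \<Rightarrow> 'e) \<Rightarrow> (nat \<Rightarrow> 'e dedge)
     \<Rightarrow> ('e fvert, 'e fedge, 'v, 'e) lgraph" where
  "Fx E1 s r sp x =
    \<lparr> LV = {W i | i. i \<ge> 1} \<union> {WY i y | i y. i \<ge> 1 \<and> y \<in> Xi E1 s r sp x i},
      LE = {FE i | i. i \<ge> 1} \<union> {FY i y | i y. i \<ge> 1 \<and> y \<in> Xi E1 s r sp x i},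
      Ls = (\<lambda>f. case f of FE i \<Rightarrow> W (Suc i)
                  | FY i y \<Rightarrow> (if length y = 1 then W i else WY i (butlast y))),
      Lr = (\<lambda>f. case f of FE i \<Rightarrow> W i | FY i y \<Rightarrow> WY i y),
      phiV = (\<lambda>w. case w of W i \<Rightarrow> rd s r (x (i - 1)) | WY i y \<Rightarrow> rd s r (last y)),
      phiE = (\<lambda>f. case f of FE i \<Rightarrow> x (i - 1) | FY i y \<Rightarrow> last y) \<rparr>"

end

theory Submission
  imports Defs
begin

lemma succ_nth: "successively R ys \<longleftrightarrow> (\<forall>i. Suc i < length ys \<longrightarrow> R (ys!i) (ys!Suc i))"
proof (induction ys)
  case Nil then show ?case by simp
next
  case (Cons y ys)
  show ?case
  proof (cases ys)
    case Nil then show ?thesis by simp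
  next
    case (Cons y' ys')
    have "(\<forall>i. Suc i < length (y#ys) \<longrightarrow> R ((y#ys)!i) ((y#ys)!Suc i)) \<longleftrightarrow>
          R y y' \<and> (\<forall>i. Suc i < length ys \<longrightarrow> R (ys!i) (ys!Suc i))"
      (is "?L \<longleftrightarrow> ?R")
    proof
      assume L: ?L
      have "R y y'" using L[rule_format, of 0] Cons by simp
      moreover have "\<forall>i. Suc i < length ys \<longrightarrow> R (ys!i) (ys!Suc i)"
        using L by (metis Suc_less_eq length_Cons nth_Cons_Suc)
      ultimately show ?R by blast
    next
      assume R: ?R
      show ?L
      proof (intro allI impI)
        fix i assume "Suc i < length (y#ys)"
        then show "R ((y#ys)!i) ((y#ys)!Suc i)" using R Cons by (cases i) auto
      qed
    qed
    then show ?thesis using Cons.IH Cons by simp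
  qed
qed

definition bstep :: "('e \<Rightarrow> 'v) \<Rightarrow> ('e \<Rightarrow> 'v) \<Rightarrow> ('v \<Rightarrow> 'e) \<Rightarrow> 'e dedge \<Rightarrow> 'e dedge \<Rightarrow> bool" where
  "bstep s r sp u v \<longleftrightarrow> rd s r u = sd s r v \<and> \<not>(\<not>is_real u \<and> is_real v) \<and>
     (is_real u \<and> \<not>is_real v \<longrightarrow> und u \<noteq> und v \<or> und u \<noteq> sp (s (und u)))"

definition qstep :: "('e \<Rightarrow> 'v) \<Rightarrow> ('v \<Rightarrow> 'e) \<Rightarrow> 'e dedge \<Rightarrow> 'e dedge \<Rightarrow> bool" where
  "qstep s sp u v \<longleftrightarrow> \<not>(\<not>is_real u \<and> is_real v) \<and>
     (is_real u \<and> \<not>is_real v \<longrightarrow> und u \<noteq> und v \<or> und u \<noteq> sp (s (und u)))"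

lemma succ_all: "(\<And>u v. u \<in> set xs \<Longrightarrow> v \<in> set xs \<Longrightarrow> Q u v) \<Longrightarrow> successively Q xs"
proof (induction xs)
  case (Cons a xs)
  have "xs = [] \<or> Q a (hd xs)" using Cons.prems by (metis hd_in_set list.set_intros)
  moreover have "successively Q xs" using Cons by simp
  ultimately show ?case by (simp add: successively_Cons)
qed simp

lemma rg_char: "(\<exists>a b. ys = a @ b \<and> (\<forall>y\<in>set a. is_real y) \<and> (\<forall>y\<in>set b. \<not> is_real y) \<and>
        (a \<noteq> [] \<longrightarrow> b \<noteq> [] \<longrightarrow> und (last a) \<noteq> und (hd b) \<or> und (last a) \<noteq> sp (s (und (last a)))))
   \<longleftrightarrow> successively (qstep s sp) ys"
proof
  assume "\<exists>a b. ys = a @ b \<and> (\<forall>y\<in>set a. is_real y) \<and> (\<forall>y\<in>set b. \<not> is_real y) \<and>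
        (a \<noteq> [] \<longrightarrow> b \<noteq> [] \<longrightarrow> und (last a) \<noteq> und (hd b) \<or> und (last a) \<noteq> sp (s (und (last a))))"
  then obtain a b where ab: "ys = a @ b" "\<forall>y\<in>set a. is_real y" "\<forall>y\<in>set b. \<not> is_real y"
    "a \<noteq> [] \<longrightarrow> b \<noteq> [] \<longrightarrow> und (last a) \<noteq> und (hd b) \<or> und (last a) \<noteq> sp (s (und (last a)))"
    by blast
  have "successively (qstep s sp) a" using ab(2) by (intro succ_all) (auto simp: qstep_def)
  moreover have "successively (qstep s sp) b" using ab(3) by (intro succ_all) (auto simp: qstep_def)
  moreover have "a = [] \<or> b = [] \<or> qstep s sp (last a) (hd b)"
    using ab(2,3,4) by (auto simp: qstep_def)
  ultimately show "successively (qstep s sp) ys" using ab(1) by (simp add: successively_append_iff)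
next
  assume "successively (qstep s sp) ys"
  then show "\<exists>a b. ys = a @ b \<and> (\<forall>y\<in>set a. is_real y) \<and> (\<forall>y\<in>set b. \<not> is_real y) \<and>
        (a \<noteq> [] \<longrightarrow> b \<noteq> [] \<longrightarrow> und (last a) \<noteq> und (hd b) \<or> und (last a) \<noteq> sp (s (und (last a))))"
  proof (induction ys)
    case Nil then show ?case by auto
  next
    case (Cons y ys)
    then have q: "ys = [] \<or> qstep s sp y (hd ys)" and sq: "successively (qstep s sp) ys"
      by (auto simp: successively_Cons)
    from Cons.IH[OF sq] obtain a b where ab: "ys = a @ b" "\<forall>y\<in>set a. is_real y" "\<forall>y\<in>set b. \<not> is_real y"
      "a \<noteq> [] \<longrightarrow> b \<noteq> [] \<longrightarrow> und (last a) \<noteq> und (hd b) \<or> und (last a) \<noteq> sp (s (und (last a)))"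
      by blast
    show ?case
    proof (cases "is_real y")
      case True
      show ?thesis
      proof (intro exI conjI)
        show "y # ys = (y # a) @ b" using ab by simp
        show "\<forall>y\<in>set (y#a). is_real y" using ab True by simp
        show "\<forall>y\<in>set b. \<not> is_real y" using ab by simp
        show "y # a \<noteq> [] \<longrightarrow> b \<noteq> [] \<longrightarrow> und (last (y # a)) \<noteq> und (hd b) \<or> und (last (y # a)) \<noteq> sp (s (und (last (y # a))))"
          using ab q True by (cases a) (auto simp: qstep_def)
      qed
    next
      case False
      have "a = []"
      proof (rule ccontr)
        assume "a \<noteq> []"
        then have "hd ys = hd a" "is_real (hd a)" using ab by auto
        then show False using q False ab(1) \<open>a \<noteq> []\<close> by (auto simp: qstep_def)
      qed
      show ?thesis
        by (rule exI[of _ "[]"], rule exI[of _ "y # b"]) (use ab \<open>a = []\<close> False in auto)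
    qed
  qed
qed

lemma bp_char: "basis_path E1 s r sp ys \<longleftrightarrow> ys \<noteq> [] \<and> (\<forall>y\<in>set ys. und y \<in> E1) \<and> successively (bstep s r sp) ys"
proof -
  have "successively (bstep s r sp) ys \<longleftrightarrow> successively (\<lambda>u v. rd s r u = sd s r v) ys \<and> successively (qstep s sp) ys"
    unfolding succ_nth by (auto simp: bstep_def qstep_def)
  then show ?thesis unfolding basis_path_def dpath_def rg_char succ_nth by blast
qed

lemma bp_append: "u \<noteq> [] \<Longrightarrow> v \<noteq> [] \<Longrightarrow> basis_path E1 s r sp (u @ v) \<longleftrightarrow>
   basis_path E1 s r sp u \<and> basis_path E1 s r sp v \<and> bstep s r sp (last u) (hd v)"
  unfolding bp_char by (auto simp: successively_append_iff)

lemma bp_pair: "basis_path E1 s r sp [u, v] \<longleftrightarrow> und u \<in> E1 \<and> und v \<in> E1 \<and> bstep s r sp u v"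
  unfolding bp_char by auto

lemma bp_single: "basis_path E1 s r sp [u] \<longleftrightarrow> und u \<in> E1"
  unfolding bp_char by auto

lemma bp_Cons: "ys \<noteq> [] \<Longrightarrow> basis_path E1 s r sp (y # ys) \<longleftrightarrow>
   und y \<in> E1 \<and> bstep s r sp y (hd ys) \<and> basis_path E1 s r sp ys"
  using bp_append[of "[y]" ys E1 s r sp] by (auto simp: bp_single)

lemma Xinf_0: "x \<in> Xinf E1 s r sp \<Longrightarrow> basis_path E1 s r sp [x 0]"
  unfolding Xinf_def by (drule CollectD, drule spec[of _ 1]) simp

lemma Xinf_1: "x \<in> Xinf E1 s r sp \<Longrightarrow> basis_path E1 s r sp [x 1, x 0]"
  unfolding Xinf_def by (drule CollectD, drule spec[of _ 2]) (simp add: numeral_2_eq_2)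

lemma Xinf_shift: assumes "x \<in> Xinf E1 s r sp" shows "(\<lambda>k. x (Suc k)) \<in> Xinf E1 s r sp"
  unfolding Xinf_def
proof (intro CollectI allI impI)
  fix n :: nat assume n: "n \<ge> 1"
  have b1: "basis_path E1 s r sp (rev (map x [0..<Suc n]))" using assms unfolding Xinf_def by (auto simp del: upt_Suc)
  have e1: "rev (map x [0..<Suc n]) = rev (map (\<lambda>k. x (Suc k)) [0..<n]) @ [x 0]"
    by (simp add: upt_conv_Cons map_Suc_upt[symmetric] del: upt_Suc)
  show "basis_path E1 s r sp (rev (map (\<lambda>k. x (Suc k)) [0..<n]))"
  proof -
    have ne: "rev (map (\<lambda>k. x (Suc k)) [0..<n]) \<noteq> []" using n by simp
    have "basis_path E1 s r sp (rev (map (\<lambda>k. x (Suc k)) [0..<n]) @ [x 0])" using b1 e1 by metis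
    then show ?thesis using bp_append[OF ne, of "[x 0]" E1 s r sp] by blast
  qed
qed

lemma Fx_simps:
  "W i \<in> LV (Fx E1 s r sp x) \<longleftrightarrow> i \<ge> 1"
  "WY i y \<in> LV (Fx E1 s r sp x) \<longleftrightarrow> i \<ge> 1 \<and> y \<in> Xi E1 s r sp x i"
  "FE i \<in> LE (Fx E1 s r sp x) \<longleftrightarrow> i \<ge> 1"
  "FY i y \<in> LE (Fx E1 s r sp x) \<longleftrightarrow> i \<ge> 1 \<and> y \<in> Xi E1 s r sp x i"
  "Ls (Fx E1 s r sp x) (FE i) = W (Suc i)"
  "Ls (Fx E1 s r sp x) (FY i y) = (if length y = 1 then W i else WY i (butlast y))"
  "Lr (Fx E1 s r sp x) (FE i) = W i"
  "Lr (Fx E1 s r sp x) (FY i y) = WY i y"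
  "phiV (Fx E1 s r sp x) (W i) = rd s r (x (i - 1))"
  "phiV (Fx E1 s r sp x) (WY i y) = rd s r (last y)"
  "phiE (Fx E1 s r sp x) (FE i) = x (i - 1)"
  "phiE (Fx E1 s r sp x) (FY i y) = last y"
  by (auto simp: Fx_def)

lemma Xi_ne: "y \<in> Xi E1 s r sp x i \<Longrightarrow> y \<noteq> []"
  unfolding Xi_def bp_char by auto

lemma Xi_butlast: assumes "y \<in> Xi E1 s r sp x i" "length y \<noteq> 1"
  shows "butlast y \<in> Xi E1 s r sp x i"
proof -
  have ne: "y \<noteq> []" using Xi_ne assms(1) .
  then obtain a l where y: "y = a @ [l]" by (metis append_butlast_last_id)
  have a: "a \<noteq> []" using y assms(2) by auto
  have "basis_path E1 s r sp a" using assms(1) bp_append[OF a, of "[l]" E1 s r sp] y unfolding Xi_def by auto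
  moreover have "hd y = hd a" using y a by simp
  ultimately show ?thesis using assms(1) y unfolding Xi_def by auto
qed

lemma Fx_wf: "f \<in> LE (Fx E1 s r sp x) \<Longrightarrow> Ls (Fx E1 s r sp x) f \<in> LV (Fx E1 s r sp x) \<and> Lr (Fx E1 s r sp x) f \<in> LV (Fx E1 s r sp x)"
  by (cases f) (auto simp: Fx_simps Xi_butlast)

lemma iso_sym:
  assumes "lgraph_iso F G" and wf: "\<And>f. f \<in> LE F \<Longrightarrow> Ls F f \<in> LV F \<and> Lr F f \<in> LV F"
  shows "lgraph_iso G F"
proof -
  obtain a b where ab: "bij_betw a (LV F) (LV G)" "bij_betw b (LE F) (LE G)"
    "\<forall>f\<in>LE F. Ls G (b f) = a (Ls F f) \<and> Lr G (b f) = a (Lr F f) \<and> phiE G (b f) = phiE F f"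
    "\<forall>w\<in>LV F. phiV G (a w) = phiV F w"
    using assms(1) unfolding lgraph_iso_def by blast
  let ?a = "inv_into (LV F) a" and ?b = "inv_into (LE F) b"
  have "bij_betw ?a (LV G) (LV F)" "bij_betw ?b (LE G) (LE F)" using ab bij_betw_inv_into by blast+
  moreover have "\<forall>f\<in>LE G. Ls F (?b f) = ?a (Ls G f) \<and> Lr F (?b f) = ?a (Lr G f) \<and> phiE F (?b f) = phiE G f"
  proof
    fix f assume f: "f \<in> LE G"
    have bf: "?b f \<in> LE F" "b (?b f) = f" using f ab(2)
      by (auto simp: bij_betw_def inv_into_into f_inv_into_f)
    have ia: "inv_into (LV F) a (a w) = w" if "w \<in> LV F" for w
      using that ab(1) by (simp add: bij_betw_def inv_into_f_f)
    show "Ls F (?b f) = ?a (Ls G f) \<and> Lr F (?b f) = ?a (Lr G f) \<and> phiE F (?b f) = phiE G f"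
      using ab(3)[rule_format, OF bf(1)] bf(2) ia wf[OF bf(1)] by metis
  qed
  moreover have "\<forall>w\<in>LV G. phiV F (?a w) = phiV G w"
  proof
    fix w assume w: "w \<in> LV G"
    have "?a w \<in> LV F" "a (?a w) = w" using w ab(1)
      by (auto simp: bij_betw_def inv_into_into f_inv_into_f)
    then show "phiV F (?a w) = phiV G w" using ab(4) by metis
  qed
  ultimately show ?thesis unfolding lgraph_iso_def by blast
qed

lemma iso_trans:
  assumes "lgraph_iso F G" "lgraph_iso G H"
  shows "lgraph_iso F H"
proof -
  obtain a b where ab: "bij_betw a (LV F) (LV G)" "bij_betw b (LE F) (LE G)"
    "\<forall>f\<in>LE F. Ls G (b f) = a (Ls F f) \<and> Lr G (b f) = a (Lr F f) \<and> phiE G (b f) = phiE F f"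
    "\<forall>w\<in>LV F. phiV G (a w) = phiV F w"
    using assms(1) unfolding lgraph_iso_def by blast
  obtain c d where cd: "bij_betw c (LV G) (LV H)" "bij_betw d (LE G) (LE H)"
    "\<forall>f\<in>LE G. Ls H (d f) = c (Ls G f) \<and> Lr H (d f) = c (Lr G f) \<and> phiE H (d f) = phiE G f"
    "\<forall>w\<in>LV G. phiV H (c w) = phiV G w"
    using assms(2) unfolding lgraph_iso_def by blast
  have "bij_betw (c \<circ> a) (LV F) (LV H)" "bij_betw (d \<circ> b) (LE F) (LE H)"
    using ab cd bij_betw_trans by blast+
  moreover have "\<forall>f\<in>LE F. Ls H ((d \<circ> b) f) = (c \<circ> a) (Ls F f) \<and> Lr H ((d \<circ> b) f) = (c \<circ> a) (Lr F f) \<and> phiE H ((d \<circ> b) f) = phiE F f"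
  proof
    fix f assume f: "f \<in> LE F"
    then have "b f \<in> LE G" using ab(2) by (auto simp: bij_betw_def)
    then show "Ls H ((d \<circ> b) f) = (c \<circ> a) (Ls F f) \<and> Lr H ((d \<circ> b) f) = (c \<circ> a) (Lr F f) \<and> phiE H ((d \<circ> b) f) = phiE F f"
      using ab(3) cd(3) f by simp
  qed
  moreover have "\<forall>w\<in>LV F. phiV H ((c \<circ> a) w) = phiV F w"
    using ab(1,4) cd(4) by (metis bij_betw_apply comp_apply)
  ultimately show ?thesis unfolding lgraph_iso_def by blast
qed

lemma XiS: "j \<ge> 1 \<Longrightarrow> y \<in> Xi E1 s r sp x (Suc j) \<longleftrightarrow>
   y \<in> Xi E1 s r sp (\<lambda>k. x (Suc k)) j \<and> (j = 1 \<longrightarrow> hd y \<noteq> x 0)"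
proof (cases "j = 1")
  case True then show ?thesis unfolding Xi_def by auto
next
  case False
  assume "j \<ge> 1"
  then obtain k where k: "j = Suc (Suc k)" using False by (metis One_nat_def Suc_le_D le_SucE le_zero_eq nat.inject)
  show ?thesis unfolding Xi_def k by auto
qed

lemma Xi1_single: "x \<in> Xinf E1 s r sp \<Longrightarrow> [x 0] \<in> Xi E1 s r sp (\<lambda>k. x (Suc k)) 1"
  unfolding Xi_def using Xinf_0 Xinf_1 by fastforce

lemma Xi1_cons: assumes "x \<in> Xinf E1 s r sp" "y \<in> Xi E1 s r sp x 1"
  shows "x 0 # y \<in> Xi E1 s r sp (\<lambda>k. x (Suc k)) 1"
proof -
  have ne: "y \<noteq> []" using Xi_ne assms(2) .
  have "basis_path E1 s r sp (x 0 # y)" using assms unfolding Xi_def bp_Cons[OF ne] bp_pair by auto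
  then show ?thesis unfolding Xi_def using Xinf_1[OF assms(1)] by simp
qed

lemma Xi1_tl: assumes "y \<in> Xi E1 s r sp (\<lambda>k. x (Suc k)) 1" "hd y = x 0" "tl y \<noteq> []"
  shows "tl y \<in> Xi E1 s r sp x 1"
proof -
  have y: "y = x 0 # tl y" using assms(2) Xi_ne[OF assms(1)] by (metis list.collapse)
  have "basis_path E1 s r sp (x 0 # tl y)" using assms(1) y unfolding Xi_def by auto
  then have "basis_path E1 s r sp (tl y) \<and> und (x 0) \<in> E1 \<and> bstep s r sp (x 0) (hd (tl y))"
    using bp_Cons[OF assms(3)] by blast
  moreover have "und (hd (tl y)) \<in> E1" using calculation assms(3) unfolding bp_char by auto
  ultimately show ?thesis unfolding Xi_def bp_pair by auto
qed

definition shA :: "(nat \<Rightarrow> 'e dedge) \<Rightarrow> 'e fvert \<Rightarrow> 'e fvert" where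
  "shA x w = (case w of W i \<Rightarrow> if i = 1 then WY 1 [x 0] else W (i - 1)
                      | WY i y \<Rightarrow> if i = 1 then WY 1 (x 0 # y) else WY (i - 1) y)"
definition shA' :: "(nat \<Rightarrow> 'e dedge) \<Rightarrow> 'e fvert \<Rightarrow> 'e fvert" where
  "shA' x w = (case w of W j \<Rightarrow> W (Suc j)
     | WY j y \<Rightarrow> if j \<ge> 2 \<or> hd y \<noteq> x 0 then WY (Suc j) y else if tl y = [] then W 1 else WY 1 (tl y))"
definition shB :: "(nat \<Rightarrow> 'e dedge) \<Rightarrow> 'e fedge \<Rightarrow> 'e fedge" where
  "shB x w = (case w of FE i \<Rightarrow> if i = 1 then FY 1 [x 0] else FE (i - 1)
                      | FY i y \<Rightarrow> if i = 1 then FY 1 (x 0 # y) else FY (i - 1) y)"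
definition shB' :: "(nat \<Rightarrow> 'e dedge) \<Rightarrow> 'e fedge \<Rightarrow> 'e fedge" where
  "shB' x w = (case w of FE j \<Rightarrow> FE (Suc j)
     | FY j y \<Rightarrow> if j \<ge> 2 \<or> hd y \<noteq> x 0 then FY (Suc j) y else if tl y = [] then FE 1 else FY 1 (tl y))"

lemma shA_in: assumes "x \<in> Xinf E1 s r sp" "w \<in> LV (Fx E1 s r sp x)"
  shows "shA x w \<in> LV (Fx E1 s r sp (\<lambda>k. x (Suc k)))"
proof (cases w)
  case (W i) then show ?thesis using assms Xi1_single[OF assms(1)] by (auto simp: shA_def Fx_simps)
next
  case (WY i y)
  show ?thesis
  proof (cases "i = 1")
    case True then show ?thesis using assms WY Xi1_cons[OF assms(1)] by (auto simp: shA_def Fx_simps)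
  next
    case False
    then obtain j where j: "i = Suc j" "j \<ge> 1" using assms WY by (cases i) (auto simp: Fx_simps)
    then show ?thesis using assms WY XiS[OF j(2), of y E1 s r sp x] by (auto simp: shA_def Fx_simps)
  qed
qed

lemma shA'_in: assumes "x \<in> Xinf E1 s r sp" "w \<in> LV (Fx E1 s r sp (\<lambda>k. x (Suc k)))"
  shows "shA' x w \<in> LV (Fx E1 s r sp x)"
proof (cases w)
  case (W i) then show ?thesis using assms by (auto simp: shA'_def Fx_simps)
next
  case (WY j y)
  then have j: "j \<ge> 1" and y: "y \<in> Xi E1 s r sp (\<lambda>k. x (Suc k)) j" using assms(2) by (auto simp: Fx_simps)
  show ?thesis
  proof (cases "j \<ge> 2 \<or> hd y \<noteq> x 0")
    case True then show ?thesis using WY j y XiS[OF j, of y E1 s r sp x] by (auto simp: shA'_def Fx_simps)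
  next
    case False then have "j = 1" using j by auto
    then show ?thesis using WY y False Xi1_tl[of y E1 s r sp x] by (auto simp: shA'_def Fx_simps)
  qed
qed

lemma shA_left: assumes "w \<in> LV (Fx E1 s r sp x)" shows "shA' x (shA x w) = w"
proof (cases w)
  case (W i) then show ?thesis using assms by (auto simp: shA_def shA'_def Fx_simps)
next
  case (WY i y)
  then have i: "i \<ge> 1" and y: "y \<in> Xi E1 s r sp x i" using assms by (auto simp: Fx_simps)
  show ?thesis
  proof (cases "i = 1")
    case True then show ?thesis using WY Xi_ne[OF y] by (auto simp: shA_def shA'_def)
  next
    case False
    then have "i \<ge> 2" using i by auto
    moreover have "i = 2 \<Longrightarrow> hd y \<noteq> x 0" using y unfolding Xi_def by auto
    ultimately show ?thesis using WY by (cases "i = 2") (auto simp: shA_def shA'_def)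
  qed
qed

lemma shA_right: assumes "w \<in> LV (Fx E1 s r sp (\<lambda>k. x (Suc k)))" shows "shA x (shA' x w) = w"
proof (cases w)
  case (W i) then show ?thesis using assms by (auto simp: shA_def shA'_def Fx_simps)
next
  case (WY j y)
  then have j: "j \<ge> 1" and y: "y \<in> Xi E1 s r sp (\<lambda>k. x (Suc k)) j" using assms by (auto simp: Fx_simps)
  have "y \<noteq> []" using Xi_ne[OF y] .
  then show ?thesis using WY j by (cases y) (auto simp: shA_def shA'_def)
qed

lemma shB_in: assumes "x \<in> Xinf E1 s r sp" "w \<in> LE (Fx E1 s r sp x)"
  shows "shB x w \<in> LE (Fx E1 s r sp (\<lambda>k. x (Suc k)))"
proof (cases w)
  case (FE i) then show ?thesis using assms Xi1_single[OF assms(1)] by (auto simp: shB_def Fx_simps)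
next
  case (FY i y)
  show ?thesis
  proof (cases "i = 1")
    case True then show ?thesis using assms FY Xi1_cons[OF assms(1)] by (auto simp: shB_def Fx_simps)
  next
    case False
    then obtain j where j: "i = Suc j" "j \<ge> 1" using assms FY by (cases i) (auto simp: Fx_simps)
    then show ?thesis using assms FY XiS[OF j(2), of y E1 s r sp x] by (auto simp: shB_def Fx_simps)
  qed
qed

lemma shB'_in: assumes "x \<in> Xinf E1 s r sp" "w \<in> LE (Fx E1 s r sp (\<lambda>k. x (Suc k)))"
  shows "shB' x w \<in> LE (Fx E1 s r sp x)"
proof (cases w)
  case (FE i) then show ?thesis using assms by (auto simp: shB'_def Fx_simps)
next
  case (FY j y)
  then have j: "j \<ge> 1" and y: "y \<in> Xi E1 s r sp (\<lambda>k. x (Suc k)) j" using assms(2) by (auto simp: Fx_simps)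
  show ?thesis
  proof (cases "j \<ge> 2 \<or> hd y \<noteq> x 0")
    case True then show ?thesis using FY j y XiS[OF j, of y E1 s r sp x] by (auto simp: shB'_def Fx_simps)
  next
    case False then have "j = 1" using j by auto
    then show ?thesis using FY y False Xi1_tl[of y E1 s r sp x] by (auto simp: shB'_def Fx_simps)
  qed
qed

lemma shB_left: assumes "w \<in> LE (Fx E1 s r sp x)" shows "shB' x (shB x w) = w"
proof (cases w)
  case (FE i) then show ?thesis using assms by (auto simp: shB_def shB'_def Fx_simps)
next
  case (FY i y)
  then have i: "i \<ge> 1" and y: "y \<in> Xi E1 s r sp x i" using assms by (auto simp: Fx_simps)
  show ?thesis
  proof (cases "i = 1")
    case True then show ?thesis using FY Xi_ne[OF y] by (auto simp: shB_def shB'_def)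
  next
    case False
    then have "i \<ge> 2" using i by auto
    moreover have "i = 2 \<Longrightarrow> hd y \<noteq> x 0" using y unfolding Xi_def by auto
    ultimately show ?thesis using FY by (cases "i = 2") (auto simp: shB_def shB'_def)
  qed
qed

lemma shB_right: assumes "w \<in> LE (Fx E1 s r sp (\<lambda>k. x (Suc k)))" shows "shB x (shB' x w) = w"
proof (cases w)
  case (FE i) then show ?thesis using assms by (auto simp: shB_def shB'_def Fx_simps)
next
  case (FY j y)
  then have j: "j \<ge> 1" and y: "y \<in> Xi E1 s r sp (\<lambda>k. x (Suc k)) j" using assms by (auto simp: Fx_simps)
  have "y \<noteq> []" using Xi_ne[OF y] .
  then show ?thesis using FY j by (cases y) (auto simp: shB_def shB'_def)
qed

lemma sh_compat: assumes "f \<in> LE (Fx E1 s r sp x)"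
  shows "Ls (Fx E1 s r sp (\<lambda>k. x (Suc k))) (shB x f) = shA x (Ls (Fx E1 s r sp x) f) \<and>
         Lr (Fx E1 s r sp (\<lambda>k. x (Suc k))) (shB x f) = shA x (Lr (Fx E1 s r sp x) f) \<and>
         phiE (Fx E1 s r sp (\<lambda>k. x (Suc k))) (shB x f) = phiE (Fx E1 s r sp x) f"
proof (cases f)
  case (FE i)
  have "i \<ge> 1 \<Longrightarrow> i \<noteq> 1 \<Longrightarrow> Suc (i - Suc (Suc 0)) = i - Suc 0" by arith
  then show ?thesis using assms FE by (auto simp: shB_def shA_def Fx_simps)
next
  case (FY i y)
  then have i: "i \<ge> 1" and y: "y \<in> Xi E1 s r sp x i" using assms by (auto simp: Fx_simps)
  have ne: "y \<noteq> []" using Xi_ne[OF y] .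
  show ?thesis
  proof (cases "i = 1")
    case True
    then show ?thesis using FY ne by (cases "length y = 1") (auto simp: shB_def shA_def Fx_simps length_Suc_conv)
  next
    case False
    then show ?thesis using FY ne i by (auto simp: shB_def shA_def Fx_simps)
  qed
qed

lemma sh_phiV: assumes "w \<in> LV (Fx E1 s r sp x)"
  shows "phiV (Fx E1 s r sp (\<lambda>k. x (Suc k))) (shA x w) = phiV (Fx E1 s r sp x) w"
proof (cases w)
  case (W i)
  have "i \<ge> 1 \<Longrightarrow> i \<noteq> 1 \<Longrightarrow> Suc (i - Suc (Suc 0)) = i - Suc 0" by arith
  then show ?thesis using assms W by (auto simp: shA_def Fx_simps)
next
  case (WY i y)
  then have y: "y \<in> Xi E1 s r sp x i" using assms by (auto simp: Fx_simps)
  then show ?thesis using WY Xi_ne[OF y] by (auto simp: shA_def Fx_simps)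
qed

lemma shift_iso: assumes "x \<in> Xinf E1 s r sp"
  shows "lgraph_iso (Fx E1 s r sp x) (Fx E1 s r sp (\<lambda>k. x (Suc k)))"
  unfolding lgraph_iso_def
proof (intro exI conjI)
  show "bij_betw (shA x) (LV (Fx E1 s r sp x)) (LV (Fx E1 s r sp (\<lambda>k. x (Suc k))))"
    by (rule bij_betw_byWitness[where f'="shA' x"]) (use shA_left shA_right shA_in[OF assms] shA'_in[OF assms] in auto)
  show "bij_betw (shB x) (LE (Fx E1 s r sp x)) (LE (Fx E1 s r sp (\<lambda>k. x (Suc k))))"
    by (rule bij_betw_byWitness[where f'="shB' x"]) (use shB_left shB_right shB_in[OF assms] shB'_in[OF assms] in auto)
qed (use sh_compat[of _ E1 s r sp x] sh_phiV[of _ E1 s r sp x] in blast)+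

lemma Xinf_shiftn: "x \<in> Xinf E1 s r sp \<Longrightarrow> (\<lambda>k. x (m + k)) \<in> Xinf E1 s r sp"
proof (induction m)
  case 0 then show ?case by simp
next
  case (Suc m)
  have "(\<lambda>k. (\<lambda>k. x (m + k)) (Suc k)) \<in> Xinf E1 s r sp" using Xinf_shift Suc by blast
  then show ?case by simp
qed

lemma shiftn_iso: "x \<in> Xinf E1 s r sp \<Longrightarrow> lgraph_iso (Fx E1 s r sp x) (Fx E1 s r sp (\<lambda>k. x (m + k)))"
proof (induction m)
  case 0
  have "lgraph_iso (Fx E1 s r sp x) (Fx E1 s r sp x)"
    unfolding lgraph_iso_def by (rule exI[of _ id], rule exI[of _ id]) auto
  then show ?case by simp
next
  case (Suc m)
  have "lgraph_iso (Fx E1 s r sp (\<lambda>k. x (m + k))) (Fx E1 s r sp (\<lambda>k. (\<lambda>k. x (m + k)) (Suc k)))"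
    using shift_iso Xinf_shiftn Suc.prems by blast
  then have "lgraph_iso (Fx E1 s r sp (\<lambda>k. x (m + k))) (Fx E1 s r sp (\<lambda>k. x (Suc m + k)))" by simp
  then show ?case using iso_trans Suc by blast
qed

lemma tail_to_iso: assumes "x \<in> Xinf E1 s r sp" "z \<in> Xinf E1 s r sp" "tail_equiv x z"
  shows "lgraph_iso (Fx E1 s r sp x) (Fx E1 s r sp z)"
proof -
  obtain m n where mn: "\<forall>k. x (m + k) = z (n + k)" using assms(3) unfolding tail_equiv_def by blast
  have eq: "(\<lambda>k. x (m + k)) = (\<lambda>k. z (n + k))" using mn by auto
  have 1: "lgraph_iso (Fx E1 s r sp x) (Fx E1 s r sp (\<lambda>k. z (n + k)))" using shiftn_iso[OF assms(1), of m] eq by simp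
  have "lgraph_iso (Fx E1 s r sp z) (Fx E1 s r sp (\<lambda>k. z (n + k)))" using shiftn_iso[OF assms(2)] .
  then have 2: "lgraph_iso (Fx E1 s r sp (\<lambda>k. z (n + k))) (Fx E1 s r sp z)"
    by (rule iso_sym) (rule Fx_wf)
  show ?thesis using iso_trans[OF 1 2] .
qed

lemma inedge_W: "f \<in> LE (Fx E1 s r sp z) \<Longrightarrow> Lr (Fx E1 s r sp z) f = W j \<Longrightarrow> f = FE j"
  by (cases f) (auto simp: Fx_simps)
lemma inedge_WY: "f \<in> LE (Fx E1 s r sp z) \<Longrightarrow> Lr (Fx E1 s r sp z) f = WY j y \<Longrightarrow> f = FY j y"
  by (cases f) (auto simp: Fx_simps)

lemma iso_to_tail: assumes "lgraph_iso (Fx E1 s r sp x) (Fx E1 s r sp z)"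
  shows "tail_equiv x z"
proof -
  let ?F = "Fx E1 s r sp x" and ?G = "Fx E1 s r sp z"
  obtain a b where ab: "bij_betw a (LV ?F) (LV ?G)" "bij_betw b (LE ?F) (LE ?G)"
    "\<forall>f\<in>LE ?F. Ls ?G (b f) = a (Ls ?F f) \<and> Lr ?G (b f) = a (Lr ?F f) \<and> phiE ?G (b f) = phiE ?F f"
    using assms unfolding lgraph_iso_def by blast
  have aW: "a (W i) \<in> LV ?G" if "i \<ge> 1" for i using ab(1) that by (auto simp: bij_betw_def Fx_simps)
  have stepW: "a (W (Suc i)) = W (Suc j) \<and> x (i - 1) = z (j - 1)" if "i \<ge> 1" "a (W i) = W j" for i j
  proof -
    have f: "FE i \<in> LE ?F" using that by (simp add: Fx_simps)
    then have bf: "b (FE i) \<in> LE ?G" using ab(2) by (auto simp: bij_betw_def)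
    have c: "Ls ?G (b (FE i)) = a (W (Suc i))" "Lr ?G (b (FE i)) = a (W i)" "phiE ?G (b (FE i)) = x (i - 1)"
      using ab(3) f by (auto simp: Fx_simps)
    have "b (FE i) = FE j" using inedge_W[OF bf] c(2) that(2) by simp
    then show ?thesis using c by (simp add: Fx_simps)
  qed
  have stepWY: "a (W (Suc i)) = (if length y = 1 then W j else WY j (butlast y))" if "i \<ge> 1" "a (W i) = WY j y" for i j y
  proof -
    have f: "FE i \<in> LE ?F" using that by (simp add: Fx_simps)
    then have bf: "b (FE i) \<in> LE ?G" using ab(2) by (auto simp: bij_betw_def)
    have c: "Ls ?G (b (FE i)) = a (W (Suc i))" "Lr ?G (b (FE i)) = a (W i)"
      using ab(3) f by (auto simp: Fx_simps)
    have "b (FE i) = FY j y" using inedge_WY[OF bf] c(2) that(2) by simp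
    then show ?thesis using c by (simp add: Fx_simps)
  qed
  have reachW: "\<forall>i y. i \<ge> 1 \<longrightarrow> length y = n \<longrightarrow> y \<noteq> [] \<longrightarrow> a (W i) = WY j y \<longrightarrow> a (W (i + n)) = W j" for n j
  proof (induction n)
    case 0 then show ?case by simp
  next
    case (Suc n)
    show ?case
    proof (intro allI impI)
      fix i y assume h: "i \<ge> 1" "length y = Suc n" "y \<noteq> []" "a (W i) = WY j y"
      have s: "a (W (Suc i)) = (if length y = 1 then W j else WY j (butlast y))" using stepWY h by blast
      show "a (W (i + Suc n)) = W j"
      proof (cases "n = 0")
        case True then show ?thesis using s h by simp
      next
        case False
        have l: "length (butlast y) = n" using h by simp
        have b1: "butlast y \<noteq> []" using l False by (metis list.size(3))
        have b2: "a (W (Suc i)) = WY j (butlast y)" using s h False by auto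
        from l b1 b2 show ?thesis using Suc.IH[rule_format, of "Suc i" "butlast y"] by simp
      qed
    qed
  qed
  obtain i0 j0 where ij: "i0 \<ge> 1" "j0 \<ge> 1" "a (W i0) = W j0"
  proof (cases "a (W 1)")
    case (W j) then show ?thesis using that aW[of 1] by (auto simp: Fx_simps)
  next
    case (WY j y)
    then have "j \<ge> 1" "y \<in> Xi E1 s r sp z j" using aW[of 1] by (auto simp: Fx_simps)
    then have "a (W (1 + length y)) = W j" using reachW[of "length y" j] WY Xi_ne by blast
    then show ?thesis using that[of "Suc (length y)" j] \<open>j \<ge> 1\<close> by simp
  qed
  have chain: "a (W (i0 + k)) = W (j0 + k) \<and> x (i0 + k - 1) = z (j0 + k - 1)" for k
  proof (induction k)
    case 0 then show ?case using stepW[of i0 j0] ij by simp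
  next
    case (Suc k)
    have "a (W (i0 + Suc k)) = W (j0 + Suc k)" using stepW[of "i0 + k" "j0 + k"] Suc ij by simp
    moreover have "x (i0 + Suc k - 1) = z (j0 + Suc k - 1)"
      using stepW[of "i0 + Suc k" "j0 + Suc k"] calculation ij by simp
    ultimately show ?case by simp
  qed
  have "\<forall>k. x (i0 - 1 + k) = z (j0 - 1 + k)"
  proof
    fix k
    have "i0 - 1 + k = i0 + k - 1" "j0 - 1 + k = j0 + k - 1" using ij by auto
    then show "x (i0 - 1 + k) = z (j0 - 1 + k)" using chain[of k] by simp
  qed
  then show ?thesis unfolding tail_equiv_def by blast
qed

theorem proposition5p9:
  fixes E0 :: "'v set" and E1 :: "'e set" and s r :: "'e \<Rightarrow> 'v" and sp :: "'v \<Rightarrow> 'e"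
    and x z :: "nat \<Rightarrow> 'e dedge"
  assumes "graph_wf E0 E1 s r"
    and "row_finite E0 E1 s"
    and "special_choice E0 E1 s sp"
    and "x \<in> Xinf E1 s r sp"
    and "z \<in> Xinf E1 s r sp"
  shows "lgraph_iso (Fx E1 s r sp x) (Fx E1 s r sp z) \<longleftrightarrow> tail_equiv x z"
  using iso_to_tail tail_to_iso assms(4,5) by blast

end
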